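(* Every whirlygig is well-bicovered.
   Context: All graphs are finite and simple; "subgraph" means induced subgraph. A graph is well-bicovered if every vertex-inclusion-maximal induced bipartite subgraph has the same order. A maximal outerplanar graph (MOP) is an outerplanar graph to which no edge can be added while preserving outerplanarity. A whirlygig is constructed as follows: take a MOP $M$ with $m\ge 3$ vertices whose outer cycle is $u_1u_2\cdots u_mu_1$ (indices mod $m$); for each $i$ add a new vertex $t_i$ adjacent only to $u_i$ and $u_{i+1}$, and another new vertex $s_i$ adjacent only to $t_i$ and $u_i$. The case $m=2$ is also allowed, treating the MOP $K_2$ on $u_1,u_2$ as a cycle with two edges $u_1u_2$ and $u_2u_1$ and performing the same construction (yielding $P_6^2$). *)

theory Defs
  imports Main
begin

(* Finite simple graphs are given by a vertex set V and a symmetric,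
   irreflexive adjacency relation adj (only its restriction to V matters). *)

definition simple_graph :: "'a set \<Rightarrow> ('a \<Rightarrow> 'a \<Rightarrow> bool) \<Rightarrow> bool" where
  "simple_graph V adj \<longleftrightarrow> finite V \<and> (\<forall>x y. adj x y \<longrightarrow> adj y x) \<and> (\<forall>x. \<not> adj x x)"

definition induces_bipartite :: "('a \<Rightarrow> 'a \<Rightarrow> bool) \<Rightarrow> 'a set \<Rightarrow> bool" where
  "induces_bipartite adj X \<longleftrightarrow>
     (\<exists>A B. A \<union> B = X \<and> A \<inter> B = {} \<and>
            (\<forall>x\<in>A. \<forall>y\<in>A. \<not> adj x y) \<and> (\<forall>x\<in>B. \<forall>y\<in>B. \<not> adj x y))"

definition maximal_bipartite :: "'a set \<Rightarrow> ('a \<Rightarrow> 'a \<Rightarrow> bool) \<Rightarrow> 'a set \<Rightarrow> bool" where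
  "maximal_bipartite V adj X \<longleftrightarrow>
     X \<subseteq> V \<and> induces_bipartite adj X \<and>
     (\<forall>Y. X \<subset> Y \<and> Y \<subseteq> V \<longrightarrow> \<not> induces_bipartite adj Y)"

definition well_bicovered :: "'a set \<Rightarrow> ('a \<Rightarrow> 'a \<Rightarrow> bool) \<Rightarrow> bool" where
  "well_bicovered V adj \<longleftrightarrow>
     (\<forall>X Y. maximal_bipartite V adj X \<and> maximal_bipartite V adj Y \<longrightarrow> card X = card Y)"

(* Maximal outerplanar graphs on vertices 0..m-1 with outer cycle 0,1,...,m-1,0.
   Two chords ab, cd (four distinct endpoints) cross iff exactly one of c, d
   lies strictly between a and b in the cyclic order. *)
definition strictly_between :: "nat \<Rightarrow> nat \<Rightarrow> nat \<Rightarrow> bool" where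
  "strictly_between a x b \<longleftrightarrow> min a b < x \<and> x < max a b"

definition crosses :: "nat \<Rightarrow> nat \<Rightarrow> nat \<Rightarrow> nat \<Rightarrow> bool" where
  "crosses a b c d \<longleftrightarrow> distinct [a, b, c, d] \<and>
     (strictly_between a c b \<noteq> strictly_between a d b)"

(* E is a MOP on {0..<m} (m >= 2) whose outer (Hamiltonian) cycle is 0,1,...,m-1:
   it contains the cycle edges, its edges are pairwise non-crossing when drawn as
   chords of a disk (outerplanar embedding with the cycle as outer face), and it is
   edge-maximal with this property.  For m = 2 this is K_2. *)
definition mop_outer :: "nat \<Rightarrow> (nat \<Rightarrow> nat \<Rightarrow> bool) \<Rightarrow> bool" where
  "mop_outer m E \<longleftrightarrow> m \<ge> 2 \<and>
     (\<forall>i j. E i j \<longrightarrow> i < m \<and> j < m \<and> i \<noteq> j) \<and>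
     (\<forall>i j. E i j \<longrightarrow> E j i) \<and>
     (\<forall>i<m. E i (Suc i mod m)) \<and>
     (\<forall>a b c d. E a b \<and> E c d \<longrightarrow> \<not> crosses a b c d) \<and>
     (\<forall>a<m. \<forall>b<m. a \<noteq> b \<and> \<not> E a b \<longrightarrow> (\<exists>c d. E c d \<and> crosses a b c d))"

(* directed edge list of the whirlygig built from MOP E with labelled vertices
   u i, t i, s i (i < m); indices mod m *)
definition whirly_edge ::
  "nat \<Rightarrow> (nat \<Rightarrow> nat \<Rightarrow> bool) \<Rightarrow> (nat \<Rightarrow> 'a) \<Rightarrow> (nat \<Rightarrow> 'a) \<Rightarrow> (nat \<Rightarrow> 'a) \<Rightarrow> 'a \<Rightarrow> 'a \<Rightarrow> bool" where
  "whirly_edge m E u t s x y \<longleftrightarrow>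
     (\<exists>i<m. \<exists>j<m. E i j \<and> x = u i \<and> y = u j) \<or>
     (\<exists>i<m. (x = t i \<and> y = u i) \<or> (x = t i \<and> y = u (Suc i mod m)) \<or>
            (x = s i \<and> y = t i) \<or> (x = s i \<and> y = u i))"

definition is_whirlygig :: "'a set \<Rightarrow> ('a \<Rightarrow> 'a \<Rightarrow> bool) \<Rightarrow> bool" where
  "is_whirlygig V adj \<longleftrightarrow>
     (\<exists>m E u t s. mop_outer m E \<and>
        inj_on u {..<m} \<and> inj_on t {..<m} \<and> inj_on s {..<m} \<and>
        u ` {..<m} \<inter> t ` {..<m} = {} \<and> u ` {..<m} \<inter> s ` {..<m} = {} \<and>
        t ` {..<m} \<inter> s ` {..<m} = {} \<and>
        V = u ` {..<m} \<union> t ` {..<m} \<union> s ` {..<m} \<and>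
        (\<forall>x y. adj x y \<longleftrightarrow> whirly_edge m E u t s x y \<or> whirly_edge m E u t s y x))"

end

theory Submission
  imports Defs
begin

lemma bip_subset:
  assumes "induces_bipartite adj X" "Y \<subseteq> X"
  shows "induces_bipartite adj Y"
proof -
  obtain A B where AB: "A \<union> B = X" "A \<inter> B = {}" "\<forall>x\<in>A. \<forall>y\<in>A. \<not> adj x y" "\<forall>x\<in>B. \<forall>y\<in>B. \<not> adj x y"
    using assms(1) unfolding induces_bipartite_def by blast
  show ?thesis unfolding induces_bipartite_def
    by (rule exI[of _ "A \<inter> Y"], rule exI[of _ "B \<inter> Y"]) (use AB assms(2) in auto)
qed

lemma bip_insert:
  assumes "induces_bipartite adj X" "v \<notin> X" "\<not> adj v v"
    and sym: "\<And>x y. adj x y \<Longrightarrow> adj y x"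
    and nb: "\<And>y. y \<in> X \<Longrightarrow> adj v y \<Longrightarrow> y = w"
  shows "induces_bipartite adj (insert v X)"
proof -
  obtain A B where AB: "A \<union> B = X" "A \<inter> B = {}" "\<forall>x\<in>A. \<forall>y\<in>A. \<not> adj x y" "\<forall>x\<in>B. \<forall>y\<in>B. \<not> adj x y"
    using assms(1) unfolding induces_bipartite_def by blast
  have nb2: "\<And>y. y \<in> X \<Longrightarrow> adj y v \<Longrightarrow> y = w" using nb sym by blast
  show ?thesis
  proof (cases "w \<in> A")
    case True
    have "\<forall>x\<in>insert v B. \<forall>y\<in>insert v B. \<not> adj x y"
    proof (intro ballI)
      fix x y assume "x \<in> insert v B" "y \<in> insert v B"
      then show "\<not> adj x y" using AB True assms(2,3) nb nb2 by blast
    qed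
    moreover have "A \<union> insert v B = insert v X" "A \<inter> insert v B = {}" using AB assms(2) by auto
    ultimately show ?thesis unfolding induces_bipartite_def using AB(3) by blast
  next
    case False
    have "\<forall>x\<in>insert v A. \<forall>y\<in>insert v A. \<not> adj x y"
    proof (intro ballI)
      fix x y assume "x \<in> insert v A" "y \<in> insert v A"
      then show "\<not> adj x y" using AB False assms(2,3) nb nb2 by blast
    qed
    moreover have "insert v A \<union> B = insert v X" "insert v A \<inter> B = {}" using AB assms(2) by auto
    ultimately show ?thesis unfolding induces_bipartite_def using AB(4) by blast
  qed
qed

lemma triangle_not_bip:
  assumes "induces_bipartite adj X" "a \<in> X" "b \<in> X" "c \<in> X" "adj a b" "adj b c" "adj a c"
  shows False
proof -
  obtain A B where AB: "A \<union> B = X" "A \<inter> B = {}" "\<forall>x\<in>A. \<forall>y\<in>A. \<not> adj x y" "\<forall>x\<in>B. \<forall>y\<in>B. \<not> adj x y"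
    using assms(1) unfolding induces_bipartite_def by blast
  have "a \<in> A \<or> a \<in> B" "b \<in> A \<or> b \<in> B" "c \<in> A \<or> c \<in> B" using AB(1) assms(2-4) by auto
  then show False using AB(3,4) assms(5-7) by metis
qed

locale wg =
  fixes m :: nat and E u t s and V :: "'a set" and adj
  assumes mop: "mop_outer m E"
    and iu: "inj_on u {..<m}" and it: "inj_on t {..<m}" and is_: "inj_on s {..<m}"
    and d1: "u ` {..<m} \<inter> t ` {..<m} = {}" and d2: "u ` {..<m} \<inter> s ` {..<m} = {}"
    and d3: "t ` {..<m} \<inter> s ` {..<m} = {}"
    and Vd: "V = u ` {..<m} \<union> t ` {..<m} \<union> s ` {..<m}"
    and adjd: "\<And>x y. adj x y \<longleftrightarrow> whirly_edge m E u t s x y \<or> whirly_edge m E u t s y x"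
begin

lemma m2: "m \<ge> 2" using mop unfolding mop_outer_def by (rule conjunct1)
lemma Elt: "E i j \<Longrightarrow> i < m \<and> j < m"
proof -
  assume "E i j"
  moreover have "\<forall>i j. E i j \<longrightarrow> i < m \<and> j < m \<and> i \<noteq> j"
    using mop unfolding mop_outer_def by (elim conjE)
  ultimately show ?thesis by blast
qed
lemma sucm[simp]: "k < m \<Longrightarrow> Suc k mod m < m" using m2 by simp

lemma ne[simp]:
  assumes "i < m" "j < m"
  shows "u i \<noteq> t j" "t j \<noteq> u i" "u i \<noteq> s j" "s j \<noteq> u i" "t i \<noteq> s j" "s j \<noteq> t i"
  using assms d1 d2 d3 by (auto simp: disjoint_iff)

lemma injs[simp]:
  assumes "i < m" "j < m"
  shows "u i = u j \<longleftrightarrow> i = j" "t i = t j \<longleftrightarrow> i = j" "s i = s j \<longleftrightarrow> i = j"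
  using assms iu it is_ by (auto dest: inj_onD)

lemma sym: "adj x y \<Longrightarrow> adj y x" using adjd by blast

lemma adj_s: assumes "i < m" shows "adj (s i) y \<longleftrightarrow> y = t i \<or> y = u i"
  using assms unfolding adjd whirly_edge_def by (auto dest: Elt)

lemma adj_t: assumes "i < m" shows "adj (t i) y \<longleftrightarrow> y = u i \<or> y = u (Suc i mod m) \<or> y = s i"
  using assms unfolding adjd whirly_edge_def by (auto dest: Elt)

lemma adj_ut: assumes "i < m" shows "adj (t i) (u i)" using adj_t assms by blast

definition G where "G i = {s i, t i, u i}"

lemma card2: "card {a, b} \<le> 2" by (cases "a = b") auto

lemma finG: "finite (G i)" unfolding G_def by simp

lemma card_le: assumes "induces_bipartite adj X" "i < m"
  shows "card (X \<inter> G i) \<le> 2"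
proof -
  have "\<not> (s i \<in> X \<and> t i \<in> X \<and> u i \<in> X)"
    using triangle_not_bip[OF assms(1), of "s i" "t i" "u i"] adj_s adj_t assms(2) by blast
  then consider "X \<inter> G i \<subseteq> {t i, u i}" | "X \<inter> G i \<subseteq> {s i, u i}" | "X \<inter> G i \<subseteq> {s i, t i}"
    unfolding G_def by blast
  then show ?thesis
    by cases (meson card2 card_mono finite.emptyI finite.insertI le_trans)+
qed

lemma card_ge: assumes "maximal_bipartite V adj X" "i < m"
  shows "card (X \<inter> G i) \<ge> 2"
proof (rule ccontr)
  assume "\<not> ?thesis"
  hence c1: "card (X \<inter> G i) < 2" by simp
  have XV: "X \<subseteq> V" and bX: "induces_bipartite adj X"
    and mx: "\<And>Y. X \<subset> Y \<Longrightarrow> Y \<subseteq> V \<Longrightarrow> \<not> induces_bipartite adj Y"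
    using assms(1) unfolding maximal_bipartite_def by blast+
  have two: "\<And>a b. a \<in> X \<Longrightarrow> b \<in> X \<Longrightarrow> a \<in> G i \<Longrightarrow> b \<in> G i \<Longrightarrow> a \<noteq> b \<Longrightarrow> False"
  proof -
    fix a b assume h: "a \<in> X" "b \<in> X" "a \<in> G i" "b \<in> G i" "a \<noteq> b"
    have "card {a, b} \<le> card (X \<inter> G i)"
      by (rule card_mono) (use h finG in auto)
    thus False using c1 h(5) by simp
  qed
  have sV: "s i \<in> V" and tV: "t i \<in> V" using Vd assms(2) by auto
  have sG: "s i \<in> G i" and tG: "t i \<in> G i" and uG: "u i \<in> G i" unfolding G_def by auto
  have st: "s i \<noteq> t i" and su: "s i \<noteq> u i" and tu: "t i \<noteq> u i" using assms(2) by auto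
  show False
  proof (cases "s i \<in> X")
    case False
    define w where "w = (if t i \<in> X then t i else u i)"
    have "induces_bipartite adj (insert (s i) X)"
    proof (rule bip_insert[OF bX False])
      show "\<not> adj (s i) (s i)" using adj_s assms(2) st su by blast
      show "\<And>x y. adj x y \<Longrightarrow> adj y x" by (rule sym)
      fix y assume "y \<in> X" "adj (s i) y"
      then show "y = w" using adj_s[OF assms(2)] two[OF _ _ tG uG tu] unfolding w_def by auto
    qed
    moreover have "X \<subset> insert (s i) X" using False by auto
    moreover have "insert (s i) X \<subseteq> V" using XV sV by auto
    ultimately show False using mx by blast
  next
    case True
    have tX: "t i \<notin> X" using two[OF True _ sG tG st] by blast
    have uX: "u i \<notin> X" using two[OF True _ sG uG su] by blast
    have b1: "induces_bipartite adj (X - {s i})" by (rule bip_subset[OF bX]) auto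
    have b2: "induces_bipartite adj (insert (t i) (X - {s i}))"
    proof (rule bip_insert[OF b1])
      show "t i \<notin> X - {s i}" using tX by simp
      show "\<not> adj (t i) (t i)" using adj_t assms(2) st tu by auto
      show "\<And>x y. adj x y \<Longrightarrow> adj y x" by (rule sym)
      fix y assume "y \<in> X - {s i}" "adj (t i) y"
      then show "y = u (Suc i mod m)" using adj_t[OF assms(2)] uX by auto
    qed
    have b3: "induces_bipartite adj (insert (s i) (insert (t i) (X - {s i})))"
    proof (rule bip_insert[OF b2])
      show "s i \<notin> insert (t i) (X - {s i})" using st by simp
      show "\<not> adj (s i) (s i)" using adj_s assms(2) st su by blast
      show "\<And>x y. adj x y \<Longrightarrow> adj y x" by (rule sym)
      fix y assume "y \<in> insert (t i) (X - {s i})" "adj (s i) y"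
      then show "y = t i" using adj_s[OF assms(2)] uX by auto
    qed
    have eq: "insert (s i) (insert (t i) (X - {s i})) = insert (t i) X" using True by auto
    have "X \<subset> insert (t i) X" using tX by auto
    moreover have "insert (t i) X \<subseteq> V" using XV tV by auto
    ultimately show False using mx b3 eq by metis
  qed
qed

lemma card_max: assumes "maximal_bipartite V adj X" shows "card X = 2 * m"
proof -
  have XV: "X \<subseteq> V" and bX: "induces_bipartite adj X"
    using assms unfolding maximal_bipartite_def by blast+
  have VG: "V = (\<Union>i\<in>{..<m}. G i)" unfolding Vd G_def by auto
  have XU: "X = (\<Union>i\<in>{..<m}. X \<inter> G i)" using XV VG by auto
  have disj: "\<forall>i\<in>{..<m}. \<forall>j\<in>{..<m}. i \<noteq> j \<longrightarrow> (X \<inter> G i) \<inter> (X \<inter> G j) = {}"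
    unfolding G_def by auto
  have "card X = (\<Sum>i\<in>{..<m}. card (X \<inter> G i))"
    by (subst XU, rule card_UN_disjoint) (use disj finG in auto)
  also have "\<dots> = (\<Sum>i\<in>{..<m}. 2)"
    using card_le[OF bX] card_ge[OF assms] by (intro sum.cong) (auto intro: antisym)
  finally show ?thesis by simp
qed

end

theorem mainTheorem18:
  fixes V :: "'a set" and adj :: "'a \<Rightarrow> 'a \<Rightarrow> bool"
  assumes "is_whirlygig V adj"
  shows "well_bicovered V adj"
proof -
  obtain m E u t s where h: "mop_outer m E"
        "inj_on u {..<m}" "inj_on t {..<m}" "inj_on s {..<m}"
        "u ` {..<m} \<inter> t ` {..<m} = {}" "u ` {..<m} \<inter> s ` {..<m} = {}"
        "t ` {..<m} \<inter> s ` {..<m} = {}"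
        "V = u ` {..<m} \<union> t ` {..<m} \<union> s ` {..<m}"
        "\<forall>x y. adj x y \<longleftrightarrow> whirly_edge m E u t s x y \<or> whirly_edge m E u t s y x"
    using assms unfolding is_whirlygig_def by (elim exE conjE) (rule that, assumption+)
  interpret W: wg m E u t s V adj
    by (rule wg.intro[OF h(1-8)]) (use h(9) in blast)
  show ?thesis unfolding well_bicovered_def using W.card_max by simp
qed

end
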